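(* Let $q\in\mathbb{R}[x,y]$ be a positive definite quadratic form. For every psd form $f\in\mathbb{R}[x,y]$ of degree $2d$ there exist forms $\xi,\eta\in\mathbb{R}[x,y]$ with $\deg(\xi)=d-1$, $\deg(\eta)=d$ and $f=\eta^2+q\xi^2$. The number of such pairs $(\xi,\eta)$ is at most $2^{d+1}$, with equality if and only if $q\nmid f$ and $f$ is square-free.
   Context: A form is a homogeneous polynomial; a form of degree $d$ is a homogeneous polynomial of degree $d$ (possibly zero). A real binary form is psd if it takes only nonnegative values on $\mathbb{R}^2$, positive definite if it takes positive values on $\mathbb{R}^2\setminus\{0\}$. *)

theory Defs
  imports "HOL-Computational_Algebra.Computational_Algebra"
begin

text \<open>Bivariate real polynomials R[x,y] are represented as R[x][y], i.e. the type
  real poly poly: the outer variable is y, the inner one is x.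
  A polynomial p is sum over j of (coeff p j)(x) * y^j.\<close>

type_synonym bipoly = "real poly poly"

definition eval2 :: "bipoly \<Rightarrow> real \<Rightarrow> real \<Rightarrow> real" where
  "eval2 p x y = poly (map_poly (\<lambda>c. poly c x) p) y"

definition is_form :: "nat \<Rightarrow> bipoly \<Rightarrow> bool" where
  "is_form d p \<longleftrightarrow> (\<forall>i j. coeff (coeff p j) i \<noteq> 0 \<longrightarrow> i + j = d)"

definition psd2 :: "bipoly \<Rightarrow> bool" where
  "psd2 p \<longleftrightarrow> (\<forall>x y. eval2 p x y \<ge> 0)"

definition pos_def2 :: "bipoly \<Rightarrow> bool" where
  "pos_def2 p \<longleftrightarrow> (\<forall>x y. (x, y) \<noteq> (0, 0) \<longrightarrow> eval2 p x y > 0)"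

end

theory Submission
  imports Defs
begin
lemma hom_sum:
  assumes "\<And>x y. h (x + y) = h x + h y" "h 0 = 0"
  shows "h (sum f A) = (\<Sum>i\<in>A. h (f i))"
  by (induction A rule: infinite_finite_induct) (auto simp: assms)

lemma map_poly_add_hom:
  assumes "\<And>x y. h (x + y) = h x + h y" "h 0 = 0"
  shows "map_poly h (p + q) = map_poly h p + map_poly h q"
  by (rule poly_eqI) (simp add: coeff_map_poly assms)

lemma map_poly_mult_hom:
  assumes "\<And>x y. h (x + y) = h x + h y" "\<And>x y. h (x * y) = h x * h y" "h 0 = 0"
  shows "map_poly h (p * q) = map_poly h p * map_poly h q"
  by (rule poly_eqI) (simp add: coeff_map_poly assms coeff_mult hom_sum[of h, OF assms(1,3)])

lemma quad_rep:
  fixes q0 q1 q2 g0 g1 g2 :: real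
  assumes q2: "q2 > 0" and qd: "q1^2 < 4*q0*q2" and g2: "g2 > 0" and gd: "g1^2 < 4*g0*g2"
  shows "\<exists>a u v. a > 0 \<and> u^2 + q2*a^2 = g2 \<and> 2*u*v + q1*a^2 = g1 \<and> v^2 + q0*a^2 = g0"
proof -
  have q0: "q0 > 0" using q2 qd by (smt (verit) mult_nonneg_nonneg zero_le_power2 mult_le_0_iff)
  have g0: "g0 > 0" using g2 gd by (smt (verit) mult_nonneg_nonneg zero_le_power2 mult_le_0_iff)
  define F where "F = (\<lambda>l::real. (g1 - l*q1)^2 - 4*(g2 - l*q2)*(g0 - l*q0))"
  define L where "L = min (g2/q2) (g0/q0)"
  have L0: "L > 0" using q2 q0 g2 g0 by (simp add: L_def)
  have "F 0 < 0" using gd by (simp add: F_def mult_ac)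
  moreover have "F L \<ge> 0"
  proof -
    have "(g2 - L*q2) = 0 \<or> (g0 - L*q0) = 0" using q2 q0 by (auto simp: L_def min_def field_simps)
    then show ?thesis by (auto simp: F_def)
  qed
  moreover have "continuous_on {0..L} F" unfolding F_def by (intro continuous_intros)
  ultimately obtain l where l: "0 \<le> l" "l \<le> L" "F l = 0"
    using IVT'[of F 0 0 L] L0 by auto
  have l0: "l > 0" using l \<open>F 0 < 0\<close> by (cases "l = 0") auto
  have h2: "g2 - l*q2 \<ge> 0"
  proof -
    have "l \<le> g2/q2" using l(2) by (simp add: L_def)
    thus ?thesis using q2 by (simp add: field_simps)
  qed
  have h0: "g0 - l*q0 \<ge> 0"
  proof -
    have "l \<le> g0/q0" using l(2) by (simp add: L_def)
    thus ?thesis using q0 by (simp add: field_simps)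
  qed
  define u where "u = sqrt (g2 - l*q2)"
  define v where "v = (if g1 - l*q1 \<ge> 0 then 1 else -1) * sqrt (g0 - l*q0)"
  define a where "a = sqrt l"
  have a2: "a^2 = l" using l0 by (simp add: a_def)
  have u2: "u^2 = g2 - l*q2" using h2 by (simp add: u_def)
  have v2: "v^2 = g0 - l*q0" using h0 by (simp add: v_def power_mult_distrib)
  have "(g1 - l*q1)^2 = 4*(g2 - l*q2)*(g0 - l*q0)" using l(3) by (simp add: F_def)
  hence "\<bar>g1 - l*q1\<bar> = 2 * sqrt ((g2 - l*q2)*(g0 - l*q0))"
    by (metis abs_of_nonneg mult_nonneg_nonneg real_sqrt_abs real_sqrt_mult real_sqrt_four
        real_sqrt_mult_self mult.assoc zero_le_numeral h2 h0 real_sqrt_unique zero_le_power2 abs_ge_zero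
        power2_eq_square real_sqrt_mult)
  hence "2*u*v = g1 - l*q1"
    by (simp add: u_def v_def real_sqrt_mult abs_if split: if_splits)
  show ?thesis
    by (rule exI[of _ a], rule exI[of _ u], rule exI[of _ v])
       (use a2 u2 v2 \<open>2*u*v = g1 - l*q1\<close> l0 in \<open>auto simp: a_def\<close>)
qed

lemma deg1_root:
  fixes x :: "real poly"
  assumes "degree x = 1"
  shows "\<exists>t. poly x t = 0"
proof -
  have "x \<noteq> 0" using assms by auto
  hence c1: "coeff x 1 \<noteq> 0" using assms leading_coeff_0_iff by metis
  have "poly x (- coeff x 0 / coeff x 1) = 0"
    using c1 by (simp add: poly_altdef assms)
  thus ?thesis by blast
qed

lemma deg2_prime:
  fixes g :: "real poly"
  assumes "degree g = 2" "\<And>t. poly g t \<noteq> 0"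
  shows "prime_elem g"
proof (rule field_poly_irreducible_imp_prime, rule irreducibleI)
  show "g \<noteq> 0" using assms by auto
  show "\<not> g dvd 1" using assms \<open>g \<noteq> 0\<close> by (simp add: is_unit_iff_degree)
  fix a b assume gab: "g = a * b"
  hence nz: "a \<noteq> 0" "b \<noteq> 0" using \<open>g \<noteq> 0\<close> by auto
  show "a dvd 1 \<or> b dvd 1"
  proof (rule ccontr)
    assume "\<not> (a dvd 1 \<or> b dvd 1)"
    hence "degree a \<noteq> 0" "degree b \<noteq> 0" using nz by (auto simp: is_unit_iff_degree)
    moreover have "degree a + degree b = 2" using gab nz assms(1) by (simp add: degree_mult_eq)
    ultimately have "degree a = 1" by linarith
    then obtain t where "poly a t = 0" using deg1_root by blast
    hence "poly g t = 0" using gab by simp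
    thus False using assms(2) by blast
  qed
qed

definition Sset :: "real poly \<Rightarrow> real poly \<Rightarrow> (real poly \<times> real poly) set" where
  "Sset Q p = {(a,b). p = b^2 + Q * a^2}"

definition mulp :: "real poly \<Rightarrow> real poly \<times> real poly \<Rightarrow> real poly \<times> real poly \<Rightarrow> real poly \<times> real poly" where
  "mulp Q z w = (fst z * snd w + snd z * fst w, snd z * snd w - Q * fst z * fst w)"

lemma norm_mulp:
  "(snd (mulp Q z w))^2 + Q * (fst (mulp Q z w))^2
     = ((snd z)^2 + Q * (fst z)^2) * ((snd w)^2 + Q * (fst w)^2)"
  by (simp add: mulp_def power2_eq_square algebra_simps)

lemma mulp_conj:
  "mulp Q (-a0, b0) (mulp Q (a0, b0) w) = ((b0^2 + Q*a0^2) * fst w, (b0^2 + Q*a0^2) * snd w)"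
  by (simp add: mulp_def power2_eq_square algebra_simps)

lemma mulp_conj':
  "mulp Q (a0, b0) (mulp Q (-a0, b0) w) = ((b0^2 + Q*a0^2) * fst w, (b0^2 + Q*a0^2) * snd w)"
  using mulp_conj[of Q "-a0" b0 w] by simp

lemma degree_add_nonneg:
  fixes u v :: "real poly"
  assumes "lead_coeff u \<ge> 0" "lead_coeff v \<ge> 0"
  shows "degree (u + v) = max (degree u) (degree v)"
proof (cases "degree u = degree v")
  case True
  show ?thesis
  proof (cases "u = 0 \<and> v = 0")
    case True thus ?thesis by simp
  next
    case False
    hence "lead_coeff u + lead_coeff v > 0" using assms
      by (smt (verit, del_insts) leading_coeff_0_iff)
    hence "coeff (u + v) (degree u) \<noteq> 0" using True by simp
    hence "degree u \<le> degree (u + v)" by (rule le_degree)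
    moreover have "degree (u + v) \<le> max (degree u) (degree v)" by (rule degree_add_le_max)
    ultimately show ?thesis using True by simp
  qed
next
  case False
  thus ?thesis
    by (metis add.commute degree_add_eq_left degree_add_eq_right linorder_neqE_nat max.absorb1 max.absorb2 less_imp_le)
qed

locale QQ =
  fixes Q :: "real poly"
  assumes Qpos: "\<And>t. poly Q t > 0" and degQ: "degree Q = 2" and lcQ: "lead_coeff Q > 0"
begin

lemma Q_nz: "Q \<noteq> 0" using degQ by auto

lemma Q_prime: "prime_elem Q"
  using deg2_prime[OF degQ] Qpos by (metis less_irrefl)

lemma deg_norm:
  "degree (b^2 + Q * a^2) = max (2 * degree b) (if a = 0 then 0 else 2 + 2 * degree a)"
proof -
  have "lead_coeff (b^2) \<ge> 0" by (simp add: lead_coeff_power)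
  moreover have "lead_coeff (Q * a^2) \<ge> 0" using lcQ by (simp add: lead_coeff_mult lead_coeff_power)
  ultimately have "degree (b^2 + Q * a^2) = max (degree (b^2)) (degree (Q * a^2))"
    by (rule degree_add_nonneg)
  moreover have "degree (b^2) = 2 * degree b"
    by (cases "b = 0") (auto simp: degree_power_eq)
  moreover have "degree (Q * a^2) = (if a = 0 then 0 else 2 + 2 * degree a)"
    using Q_nz degQ by (auto simp: degree_mult_eq degree_power_eq)
  ultimately show ?thesis by simp
qed

lemma norm_zero: "b^2 + Q * a^2 = 0 \<Longrightarrow> a = 0 \<and> b = 0"
proof -
  assume h: "b^2 + Q * a^2 = 0"
  have "\<forall>t. poly a t = 0 \<and> poly b t = 0"
  proof
    fix t
    have "poly b t ^2 + poly Q t * poly a t ^2 = 0" using arg_cong[OF h, of "\<lambda>p. poly p t"] by simp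
    moreover have "poly Q t > 0" by (rule Qpos)
    ultimately show "poly a t = 0 \<and> poly b t = 0"
      by (smt (verit) mult_pos_pos zero_le_power2 zero_less_power2 mult_nonneg_nonneg)
  qed
  thus ?thesis using poly_all_0_iff_0 by blast
qed

lemma norm_eval_nonneg: "poly (b^2 + Q * a^2) t \<ge> 0"
  using Qpos[of t] by simp

end

definition nrm :: "real poly \<Rightarrow> real poly \<times> real poly \<Rightarrow> real poly" where
  "nrm Q w = (snd w)^2 + Q * (fst w)^2"

lemma mem_Sset: "w \<in> Sset Q p \<longleftrightarrow> nrm Q w = p"
  by (cases w) (auto simp: Sset_def nrm_def)

lemma nrm_mulp: "nrm Q (mulp Q z w) = nrm Q z * nrm Q w"
  using norm_mulp[of Q z w] by (simp add: nrm_def)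

lemma key_div:
  fixes a b a0 b0 g p1 :: "real poly"
  assumes g: "g = b0^2 + Q * a0^2" and pg: "prime_elem g"
    and N: "b^2 + Q * a^2 = g * p1" and dx: "g dvd (a*b0 - a0*b)"
  shows "\<exists>w. (a,b) = mulp Q (a0,b0) w \<and> nrm Q w = p1"
proof -
  have gnz: "g \<noteq> 0" using pg by auto
  obtain x1 where x1: "a*b0 - a0*b = g * x1" using dx by blast
  define y where "y = b*b0 + Q*a*a0"
  have id: "y^2 + Q * (a*b0 - a0*b)^2 = (b^2 + Q*a^2) * (b0^2 + Q*a0^2)"
    by (simp add: y_def power2_eq_square algebra_simps)
  have "y^2 = (b^2 + Q*a^2) * (b0^2 + Q*a0^2) - Q * (a*b0 - a0*b)^2"
    using id by (simp add: algebra_simps)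
  also have "\<dots> = (g*p1)*g - Q*(g*x1)^2" unfolding N g[symmetric] x1 by simp
  also have "\<dots> = g^2 * (p1 - Q * x1^2)" by (simp add: power2_eq_square algebra_simps)
  finally have "y^2 = g^2 * (p1 - Q * x1^2)" .
  hence "g dvd y^2" by (simp add: power2_eq_square)
  hence "g dvd y" using pg prime_elem_dvd_power by blast
  then obtain y1 where y1: "y = g * y1" by blast
  have e1: "g * (a0 * y1 + b0 * x1) = g * a"
  proof -
    have "g * (a0 * y1 + b0 * x1) = a0 * y + b0 * (a*b0 - a0*b)" using x1 y1 by (simp add: algebra_simps)
    also have "\<dots> = a * (b0^2 + Q*a0^2)" by (simp add: y_def power2_eq_square algebra_simps)
    finally show ?thesis using g by (simp add: algebra_simps)
  qed
  have e2: "g * (b0 * y1 - Q * a0 * x1) = g * b"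
  proof -
    have "g * (b0 * y1 - Q * a0 * x1) = b0 * y - Q * a0 * (a*b0 - a0*b)" using x1 y1 by (simp add: algebra_simps)
    also have "\<dots> = b * (b0^2 + Q*a0^2)" by (simp add: y_def power2_eq_square algebra_simps)
    finally show ?thesis using g by (simp add: algebra_simps)
  qed
  have eq: "(a,b) = mulp Q (a0,b0) (x1,y1)"
    using e1 e2 gnz by (simp add: mulp_def)
  have "g * p1 = g * nrm Q (x1,y1)"
    using nrm_mulp[of Q "(a0,b0)" "(x1,y1)"] eq[symmetric] N g by (simp add: nrm_def)
  hence "nrm Q (x1,y1) = p1" using gnz by simp
  thus ?thesis using eq by blast
qed

lemma key_split:
  fixes a b a0 b0 g p1 :: "real poly"
  assumes g: "g = b0^2 + Q * a0^2" and pg: "prime_elem g"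
    and N: "b^2 + Q * a^2 = g * p1"
  shows "(\<exists>w. (a,b) = mulp Q (a0,b0) w \<and> nrm Q w = p1) \<or> (\<exists>w. (a,b) = mulp Q (-a0,b0) w \<and> nrm Q w = p1)"
proof -
  have "(a*b0 - a0*b) * (a*b0 - (-a0)*b) = a^2 * (b0^2 + Q*a0^2) - a0^2 * (b^2 + Q*a^2)"
    by (simp add: power2_eq_square algebra_simps)
  also have "\<dots> = g * (a^2 - a0^2 * p1)" unfolding N g[symmetric] by (simp add: algebra_simps)
  finally have "(a*b0 - a0*b) * (a*b0 - (-a0)*b) = g * (a^2 - a0^2 * p1)" .
  hence "g dvd (a*b0 - a0*b) * (a*b0 - (-a0)*b)" by simp
  hence "g dvd (a*b0 - a0*b) \<or> g dvd (a*b0 - (-a0)*b)" using pg prime_elem_dvd_mult_iff by blast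
  moreover have "g = b0^2 + Q * (-a0)^2" using g by simp
  ultimately show ?thesis using key_div[OF g pg N] key_div[of g b0 Q "-a0", OF _ pg N] by blast
qed

lemma sqfree_mult_prime:
  fixes g p :: "'a :: idom"
  assumes "prime_elem g" "\<not> g dvd p" "squarefree p"
  shows "squarefree (g * p)"
proof (rule squarefreeI)
  fix x assume "x^2 dvd g * p"
  then obtain k where k: "g * p = x^2 * k" by blast
  hence "g dvd x^2 * k" by (metis dvd_triv_left)
  hence "g dvd x^2 \<or> g dvd k" using assms(1) prime_elem_dvd_mult_iff by blast
  thus "x dvd 1"
  proof
    assume "g dvd x^2"
    hence "g dvd x" using assms(1) prime_elem_dvd_power by blast
    then obtain y where "x = g * y" by blast
    hence "g * p = g * (g * (y^2 * k))" using k by (simp add: power2_eq_square algebra_simps)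
    hence "p = g * (y^2 * k)" using assms(1) by (simp add: prime_elem_def)
    thus ?thesis using assms(2) by simp
  next
    assume "g dvd k"
    then obtain k' where "k = g * k'" by blast
    hence "g * p = g * (x^2 * k')" using k by (simp add: algebra_simps)
    hence "p = x^2 * k'" using assms(1) by (simp add: prime_elem_def)
    thus ?thesis using assms(3) squarefreeD by (metis dvd_triv_left)
  qed
qed

lemma poly_pos_left:
  fixes h :: "real poly"
  assumes h: "poly h r > 0" shows "\<exists>t<r. poly h t > 0"
proof -
  have "(poly h \<longlongrightarrow> poly h r) (at_left r)" by (intro tendsto_intros)
  hence "eventually (\<lambda>t. poly h t > 0) (at_left r)" using h order_tendstoD(1) by blast
  moreover have "eventually (\<lambda>t. t \<in> {r-1<..<r}) (at_left r)" by (rule eventually_at_left_real) simp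
  ultimately have "eventually (\<lambda>t. t < r \<and> poly h t > 0) (at_left r)"
    by (auto elim: eventually_elim2)
  thus ?thesis using eventually_happens' trivial_limit_at_left_real by (metis (mono_tags, lifting) eventually_happens)
qed

lemma poly_pos_right:
  fixes h :: "real poly"
  assumes h: "poly h r > 0" shows "\<exists>t>r. poly h t > 0"
proof -
  have "(poly h \<longlongrightarrow> poly h r) (at_right r)" by (intro tendsto_intros)
  hence "eventually (\<lambda>t. poly h t > 0) (at_right r)" using h order_tendstoD(1) by blast
  moreover have "eventually (\<lambda>t. t \<in> {r<..<r+1}) (at_right r)" by (rule eventually_at_right_real) simp
  ultimately have "eventually (\<lambda>t. t > r \<and> poly h t > 0) (at_right r)"
    by (auto elim: eventually_elim2)
  thus ?thesis using eventually_happens' trivial_limit_at_right_real by (metis (mono_tags, lifting) eventually_happens)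
qed

lemma real_root_sq:
  fixes p :: "real poly"
  assumes nn: "\<And>t. poly p t \<ge> 0" and r: "poly p r = 0"
  shows "\<exists>p1. p = [:-r,1:]^2 * p1 \<and> (\<forall>t. poly p1 t \<ge> 0)"
proof -
  obtain p1 where p1: "p = [:-r,1:] * p1" using r by (metis dvdE poly_eq_0_iff_dvd)
  have "poly p1 r = 0"
  proof (rule ccontr)
    assume "poly p1 r \<noteq> 0"
    hence "poly p1 r > 0 \<or> poly (-p1) r > 0" by auto
    thus False
    proof
      assume "poly p1 r > 0"
      then obtain t where "t < r" "poly p1 t > 0" using poly_pos_left by blast
      hence "poly p t < 0" using p1 by (simp add: mult_neg_pos)
      thus False using nn[of t] by simp
    next
      assume "poly (-p1) r > 0"
      then obtain t where "t > r" "poly (-p1) t > 0" using poly_pos_right by blast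
      hence "poly p t < 0" using p1 by (simp add: mult_pos_neg)
      thus False using nn[of t] by simp
    qed
  qed
  then obtain p2 where p2: "p1 = [:-r,1:] * p2" by (metis dvdE poly_eq_0_iff_dvd)
  have pp: "p = [:-r,1:]^2 * p2" by (simp only: p1 p2 power2_eq_square mult.assoc)
  have "\<forall>t. poly p2 t \<ge> 0"
  proof (rule ccontr)
    assume "\<not> (\<forall>t. poly p2 t \<ge> 0)"
    then obtain s where s: "poly p2 s < 0" by (auto simp: not_le)
    have "\<exists>t. t \<noteq> r \<and> poly p2 t < 0"
    proof (cases "s = r")
      case True
      hence "poly (-p2) r > 0" using s by simp
      then obtain t where "t > r" "poly (-p2) t > 0" using poly_pos_right by blast
      thus ?thesis by (intro exI[of _ t]) auto
    next
      case False thus ?thesis using s by blast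
    qed
    then obtain t where t: "t \<noteq> r" "poly p2 t < 0" by blast
    have "(t - r)^2 > 0" using t(1) by simp
    hence "poly p t < 0" using pp t(2) by (simp add: mult_pos_neg)
    thus False using nn[of t] by simp
  qed
  thus ?thesis using pp by blast
qed

lemma poly_of_real_hom: "poly (map_poly of_real p) (of_real x :: complex) = of_real (poly p x)"
  by (induction p) (auto simp: map_poly_pCons)

lemma map_of_real_add: "map_poly (of_real :: real \<Rightarrow> complex) (p + q) = map_poly of_real p + map_poly of_real q"
  by (rule map_poly_add_hom) auto

lemma map_of_real_mult: "map_poly (of_real :: real \<Rightarrow> complex) (p * q) = map_poly of_real p * map_poly of_real q"
  by (rule map_poly_mult_hom) auto

lemma deg_le1_poly:
  fixes r :: "'a::comm_ring_1 poly"
  assumes "degree r \<le> 1"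
  shows "poly r t = coeff r 0 + coeff r 1 * t"
proof (cases "degree r = 0")
  case True
  hence "coeff r 1 = 0" by (simp add: coeff_eq_0)
  thus ?thesis using True by (simp add: poly_altdef)
next
  case False
  hence "degree r = 1" using assms by simp
  thus ?thesis by (simp add: poly_altdef)
qed

lemma complex_factor:
  fixes p :: "real poly"
  assumes nr: "\<And>t. poly p t \<noteq> 0" and dp: "degree p \<noteq> 0"
  shows "\<exists>g0 g1 p1. p = [:g0, g1, 1:] * p1 \<and> g1^2 < 4 * g0 \<and> (\<forall>t. poly [:g0,g1,1:] t > 0)"
proof -
  define pc where "pc = map_poly (of_real :: real \<Rightarrow> complex) p"
  have "degree pc = degree p" unfolding pc_def by (rule degree_map_poly) auto
  hence "\<not> constant (poly pc)" using dp constant_degree by metis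
  then obtain z where z: "poly pc z = 0" using fundamental_theorem_of_algebra by blast
  have imz: "Im z \<noteq> 0"
  proof
    assume "Im z = 0"
    hence "z = of_real (Re z)" by (simp add: complex_eq_iff)
    hence "of_real (poly p (Re z)) = (0::complex)" using z poly_of_real_hom[of p "Re z"] unfolding pc_def by simp
    thus False using nr by simp
  qed
  define g0 where "g0 = (Re z)^2 + (Im z)^2"
  define g1 where "g1 = -2 * Re z"
  define g where "g = [:g0, g1, 1:]"
  have gpos: "\<forall>t. poly g t > 0"
  proof
    fix t
    have "poly g t = (t - Re z)^2 + (Im z)^2" by (simp add: g_def g0_def g1_def power2_eq_square algebra_simps)
    thus "poly g t > 0" using imz by (smt (verit) zero_le_power2 zero_less_power2)
  qed
  have "Im z * Im z > 0" using imz by (metis not_real_square_gt_zero)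
  hence gd: "g1^2 < 4 * g0" by (simp add: g0_def g1_def power2_eq_square)
  have gnz: "g \<noteq> 0" by (simp add: g_def)
  have dg: "degree g = 2" by (simp add: g_def)
  define rr where "rr = p mod g"
  have "degree rr \<le> 1"
    using degree_mod_less[OF gnz, of p] dg unfolding rr_def by auto
  have pe: "p = g * (p div g) + rr" by (simp add: rr_def)
  have gz: "poly (map_poly of_real g) z = 0"
  proof -
    have "poly (map_poly of_real g) z = of_real g0 + of_real g1 * z + z^2"
      by (simp add: g_def map_poly_pCons power2_eq_square algebra_simps)
    also have "\<dots> = 0" by (simp add: complex_eq_iff g0_def g1_def power2_eq_square)
    finally show ?thesis .
  qed
  have "poly (map_poly of_real rr) z = 0"
    using arg_cong[OF pe, of "\<lambda>q. poly (map_poly of_real q) z"] z gz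
    unfolding pc_def by (simp add: map_of_real_add map_of_real_mult)
  moreover have "degree (map_poly (of_real :: real \<Rightarrow> complex) rr) \<le> 1"
    using \<open>degree rr \<le> 1\<close> by (subst degree_map_poly) auto
  ultimately have "coeff (map_poly of_real rr) 0 + coeff (map_poly of_real rr) 1 * z = 0"
    using deg_le1_poly by metis
  hence "of_real (coeff rr 0) + of_real (coeff rr 1) * z = (0::complex)" by (simp add: coeff_map_poly)
  hence c: "coeff rr 0 + coeff rr 1 * Re z = 0" "coeff rr 1 * Im z = 0" by (simp_all add: complex_eq_iff)
  hence "coeff rr 1 = 0" "coeff rr 0 = 0" using imz by auto
  hence "\<forall>t. poly rr t = 0" using deg_le1_poly[OF \<open>degree rr \<le> 1\<close>] by simp
  hence "rr = 0" using poly_all_0_iff_0 by blast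
  hence "p = g * (p div g)" using pe by simp
  thus ?thesis using gpos gd unfolding g_def by blast
qed

context QQ begin

lemma Q_eval: "poly Q t = coeff Q 0 + coeff Q 1 * t + coeff Q 2 * t^2"
  by (simp add: poly_altdef degQ numeral_2_eq_2 atMost_Suc power2_eq_square algebra_simps)

lemma Q_disc: "(coeff Q 1)^2 < 4 * coeff Q 0 * coeff Q 2"
proof -
  have q2: "coeff Q 2 > 0" using lcQ degQ by simp
  have "poly Q (- coeff Q 1 / (2 * coeff Q 2)) > 0" by (rule Qpos)
  hence "coeff Q 0 - (coeff Q 1)^2 / (4 * coeff Q 2) > 0"
    unfolding Q_eval using q2 by (simp add: power2_eq_square field_simps)
  thus ?thesis using q2 by (simp add: field_simps)
qed

lemma g_rep:
  assumes "g1^2 < 4*g0"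
  shows "\<exists>a b0. a > 0 \<and> [:g0,g1,1:] = b0^2 + Q*[:a:]^2"
proof -
  have q2: "coeff Q 2 > 0" using lcQ degQ by simp
  obtain a u v where auv: "a > 0" "u^2 + coeff Q 2*a^2 = 1" "2*u*v + coeff Q 1*a^2 = g1"
      "v^2 + coeff Q 0 * a^2 = g0"
    using quad_rep[OF q2 Q_disc _, of 1 g1 g0] assms by auto
  have "poly [:g0,g1,1:] t = poly ([:v,u:]^2 + Q*[:a:]^2) t" for t
  proof -
    have "poly ([:v,u:]^2 + Q*[:a:]^2) t
        = (v^2 + coeff Q 0 * a^2) + (2*u*v + coeff Q 1*a^2) * t + (u^2 + coeff Q 2*a^2) * t^2"
      unfolding poly_add poly_mult poly_power Q_eval by (simp add: power2_eq_square algebra_simps)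
    moreover have "poly [:g0,g1,1:] t = (v^2 + coeff Q 0 * a^2) + (2*u*v + coeff Q 1*a^2) * t + (u^2 + coeff Q 2*a^2) * t^2"
      by (simp only: auv(2,3,4)) (simp add: power2_eq_square algebra_simps)
    ultimately show ?thesis by simp
  qed
  hence "poly [:g0,g1,1:] = poly ([:v,u:]^2 + Q*[:a:]^2)" by (rule ext)
  hence "[:g0,g1,1:] = [:v,u:]^2 + Q*[:a:]^2" by (simp only: poly_eq_poly_eq_iff)
  thus ?thesis using auv(1) by blast
qed

end

definition good :: "real poly \<Rightarrow> real poly \<Rightarrow> bool" where
  "good Q p \<longleftrightarrow> Sset Q p \<noteq> {} \<and> finite (Sset Q p) \<and> even (degree p) \<and>
     card (Sset Q p) \<le> 2^(degree p div 2 + 1) \<and>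
     (card (Sset Q p) = 2^(degree p div 2 + 1) \<longleftrightarrow> squarefree p \<and> \<not> Q dvd p)"

context QQ begin

lemma good_const:
  assumes "degree p = 0" "p \<noteq> 0" "\<forall>t. poly p t \<ge> 0"
  shows "good Q p"
proof -
  define c where "c = coeff p 0"
  have pc: "p = [:c:]" using assms(1) unfolding c_def by (simp add: degree_0_id)
  have "c \<ge> 0" using assms(3) pc by (metis poly_pCons poly_0 mult_zero_right add.right_neutral)
  moreover have "c \<noteq> 0" using assms(2) pc by auto
  ultimately have c0: "c > 0" by simp
  have S: "Sset Q p = {(0, [:sqrt c:]), (0, [:- sqrt c:])}"
  proof (intro equalityI subsetI)
    fix w assume "w \<in> Sset Q p"
    then obtain a b where w: "w = (a,b)" and e: "p = b^2 + Q*a^2" by (auto simp: Sset_def)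
    have "degree (b^2 + Q*a^2) = 0" using e assms(1) by simp
    hence a0: "a = 0" and db: "degree b = 0" unfolding deg_norm by (auto split: if_splits)
    define \<beta> where "\<beta> = coeff b 0"
    have b: "b = [:\<beta>:]" using db unfolding \<beta>_def by (simp add: degree_0_id)
    have "[:c:] = [:\<beta>^2:]" using e a0 b pc by (simp add: power2_eq_square)
    hence "\<beta>^2 = c" by simp
    hence "\<bar>\<beta>\<bar> = sqrt c" using real_sqrt_abs[of \<beta>] by simp
    hence "\<beta> = sqrt c \<or> \<beta> = - sqrt c" by (cases "\<beta> \<ge> 0") auto
    thus "w \<in> {(0, [:sqrt c:]), (0, [:- sqrt c:])}" using w a0 b by auto
  next
    fix w :: "real poly \<times> real poly" assume "w \<in> {(0, [:sqrt c:]), (0, [:- sqrt c:])}"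
    thus "w \<in> Sset Q p" using c0 pc by (auto simp: Sset_def power2_eq_square)
  qed
  have "[:sqrt c:] \<noteq> [:- sqrt c:]" using c0 by simp
  hence card: "card (Sset Q p) = 2" unfolding S by simp
  have "squarefree p" using assms(1,2) by (intro squarefree_unit) (simp add: is_unit_iff_degree)
  moreover have "\<not> Q dvd p"
  proof
    assume "Q dvd p"
    from dvd_imp_degree_le[OF this assms(2)] show False using degQ assms(1) by simp
  qed
  ultimately show ?thesis unfolding good_def using card assms(1) S by (simp only: card) simp
qed

lemma good_transfer:
  assumes S: "Sset Q p = F ` Sset Q p1" and inj: "inj_on F (Sset Q p1)"
    and dp: "degree p = degree p1 + 2" and g1: "good Q p1"
    and nsq: "\<not> (squarefree p \<and> \<not> Q dvd p)"
  shows "good Q p"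
proof -
  have c: "card (Sset Q p) = card (Sset Q p1)" using S inj by (simp add: card_image)
  have "degree p div 2 = degree p1 div 2 + 1" using dp by simp
  moreover have "card (Sset Q p1) \<le> 2^(degree p1 div 2 + 1)" using g1 unfolding good_def by blast
  ultimately have "card (Sset Q p) \<le> 2^(degree p div 2)" using c by simp
  also have "\<dots> < 2^(degree p div 2 + 1)" by simp
  finally have lt: "card (Sset Q p) < 2^(degree p div 2 + 1)" .
  have ne: "Sset Q p \<noteq> {}" using S g1 unfolding good_def by blast
  have fin: "finite (Sset Q p)" using S g1 unfolding good_def by simp
  have ev: "even (degree p)" using dp g1 unfolding good_def by simp
  show ?thesis unfolding good_def
  proof (intro conjI)
    show "Sset Q p \<noteq> {}" by (fact ne)
    show "finite (Sset Q p)" by (fact fin)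
    show "even (degree p)" by (fact ev)
    show "card (Sset Q p) \<le> 2 ^ (degree p div 2 + 1)" using lt by (rule less_imp_le)
    show "(card (Sset Q p) = 2 ^ (degree p div 2 + 1)) = (squarefree p \<and> \<not> Q dvd p)"
    proof -
      have "card (Sset Q p) \<noteq> 2 ^ (degree p div 2 + 1)" using lt by (rule less_imp_neq)
      thus ?thesis using nsq by blast
    qed
  qed
qed

end

context QQ begin

lemma good_rr:
  assumes pnz: "p \<noteq> 0" and nn: "\<forall>t. poly p t \<ge> 0" and r: "poly p r = 0"
    and IH: "\<And>p'. degree p' < degree p \<Longrightarrow> p' \<noteq> 0 \<Longrightarrow> \<forall>t. poly p' t \<ge> 0 \<Longrightarrow> good Q p'"
  shows "good Q p"
proof -
  define l where "l = [:-r, 1:]"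
  obtain p1 where p1: "p = l^2 * p1" "\<forall>t. poly p1 t \<ge> 0"
    using real_root_sq[of p r] nn r unfolding l_def by blast
  have lnz: "l \<noteq> 0" and dl: "degree l = 1" by (simp_all add: l_def)
  have p1nz: "p1 \<noteq> 0" using p1(1) pnz by auto
  have dp: "degree p = degree p1 + 2"
    using p1(1) lnz p1nz dl by (simp add: degree_mult_eq degree_power_eq)
  have g1: "good Q p1" using IH[of p1] dp p1nz p1(2) by simp
  define F where "F = (\<lambda>w::real poly \<times> real poly. (l * fst w, l * snd w))"
  have S: "Sset Q p = F ` Sset Q p1"
  proof (intro equalityI subsetI)
    fix w assume "w \<in> Sset Q p"
    then obtain a b where w: "w = (a,b)" and e: "p = b^2 + Q*a^2" by (auto simp: Sset_def)
    have "poly b r ^2 + poly Q r * poly a r ^2 = 0" using arg_cong[OF e, of "\<lambda>q. poly q r"] r by simp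
    moreover have "poly Q r > 0" by (rule Qpos)
    ultimately have "poly a r = 0" "poly b r = 0"
      by (smt (verit) mult_pos_pos zero_le_power2 zero_less_power2 mult_nonneg_nonneg)+
    then obtain a1 b1 where a1: "a = l * a1" and b1: "b = l * b1"
      unfolding l_def by (metis dvdE poly_eq_0_iff_dvd)
    have "l^2 * p1 = l^2 * (b1^2 + Q*a1^2)" using e p1(1) a1 b1 by (simp add: power2_eq_square algebra_simps)
    hence "p1 = b1^2 + Q*a1^2" using lnz by simp
    hence "(a1,b1) \<in> Sset Q p1" by (simp add: Sset_def)
    moreover have "w = F (a1,b1)" using w a1 b1 by (simp add: F_def)
    ultimately show "w \<in> F ` Sset Q p1" by blast
  next
    fix w assume "w \<in> F ` Sset Q p1"
    then obtain a b where ab: "(a,b) \<in> Sset Q p1" and w: "w = F (a,b)" by auto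
    have "p1 = b^2 + Q*a^2" using ab by (simp add: Sset_def)
    hence "p = (l*b)^2 + Q*(l*a)^2" using p1(1) by (simp add: power2_eq_square algebra_simps)
    thus "w \<in> Sset Q p" using w by (simp add: F_def Sset_def)
  qed
  have inj: "inj_on F (Sset Q p1)"
    by (rule inj_onI) (use lnz in \<open>auto simp: F_def prod_eq_iff\<close>)
  have "\<not> squarefree p"
  proof (rule not_squarefreeI)
    show "l^2 dvd p" using p1(1) by simp
    show "\<not> l dvd 1" using dl lnz by (simp add: is_unit_iff_degree)
  qed
  thus ?thesis using good_transfer[OF S inj dp g1] by blast
qed

lemma good_qd:
  assumes pnz: "p \<noteq> 0" and nn: "\<forall>t. poly p t \<ge> 0" and qd: "Q dvd p"
    and IH: "\<And>p'. degree p' < degree p \<Longrightarrow> p' \<noteq> 0 \<Longrightarrow> \<forall>t. poly p' t \<ge> 0 \<Longrightarrow> good Q p'"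
  shows "good Q p"
proof -
  obtain p1 where p1: "p = Q * p1" using qd by blast
  have p1nz: "p1 \<noteq> 0" using p1 pnz by auto
  have nn1: "\<forall>t. poly p1 t \<ge> 0"
  proof
    fix t
    have "poly Q t * poly p1 t \<ge> 0" using nn p1 by (metis poly_mult)
    thus "poly p1 t \<ge> 0" using Qpos[of t] by (simp add: zero_le_mult_iff)
  qed
  have dp: "degree p = degree p1 + 2" using p1 p1nz Q_nz degQ by (simp add: degree_mult_eq)
  have g1: "good Q p1" using IH[of p1] dp p1nz nn1 by simp
  define F where "F = (\<lambda>w::real poly \<times> real poly. (snd w, Q * fst w))"
  have S: "Sset Q p = F ` Sset Q p1"
  proof (intro equalityI subsetI)
    fix w assume "w \<in> Sset Q p"
    then obtain a b where w: "w = (a,b)" and e: "p = b^2 + Q*a^2" by (auto simp: Sset_def)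
    have "b^2 = Q * (p1 - a^2)" using e p1 by (simp add: algebra_simps)
    hence "Q dvd b^2" by simp
    hence "Q dvd b" using Q_prime prime_elem_dvd_power by blast
    then obtain c where c: "b = Q * c" by blast
    have "Q * p1 = Q * (a^2 + Q * c^2)" using e p1 c by (simp add: power2_eq_square algebra_simps)
    hence "p1 = a^2 + Q * c^2" using Q_nz by simp
    hence "(c, a) \<in> Sset Q p1" by (simp add: Sset_def)
    moreover have "w = F (c, a)" using w c by (simp add: F_def)
    ultimately show "w \<in> F ` Sset Q p1" by blast
  next
    fix w assume "w \<in> F ` Sset Q p1"
    then obtain a b where ab: "(a,b) \<in> Sset Q p1" and w: "w = F (a,b)" by auto
    have "p1 = b^2 + Q*a^2" using ab by (simp add: Sset_def)
    hence "p = (Q*a)^2 + Q*b^2" using p1 by (simp add: power2_eq_square algebra_simps)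
    thus "w \<in> Sset Q p" using w by (simp add: F_def Sset_def)
  qed
  have inj: "inj_on F (Sset Q p1)"
    by (rule inj_onI) (use Q_nz in \<open>auto simp: F_def prod_eq_iff\<close>)
  show ?thesis using good_transfer[OF S inj dp g1] qd by blast
qed

end

context QQ begin

lemma unit_const_dvd:
  fixes g b :: "real poly"
  assumes "c \<noteq> 0" "g dvd [:c:] * b"
  shows "g dvd b"
proof -
  have "b = [:1/c:] * ([:c:] * b)" using assms(1) by (simp add: mult.assoc[symmetric])
  thus ?thesis using assms(2) by (metis dvd_mult)
qed

lemma good_cx:
  assumes pnz: "p \<noteq> 0" and nn: "\<forall>t. poly p t \<ge> 0" and nr: "\<forall>r. poly p r \<noteq> 0"
    and nq: "\<not> Q dvd p" and dp0: "degree p \<noteq> 0"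
    and IH: "\<And>p'. degree p' < degree p \<Longrightarrow> p' \<noteq> 0 \<Longrightarrow> \<forall>t. poly p' t \<ge> 0 \<Longrightarrow> good Q p'"
  shows "good Q p"
proof -
  obtain g0 g1 p1 where gp: "p = [:g0, g1, 1:] * p1" and gd: "g1^2 < 4 * g0"
      and gpos: "\<forall>t. poly [:g0,g1,1:] t > 0"
    using complex_factor[of p] nr dp0 by blast
  define g where "g = [:g0, g1, 1:]"
  have gp': "p = g * p1" using gp by (simp add: g_def)
  have gpos': "\<And>t. poly g t > 0" using gpos by (simp add: g_def)
  obtain \<alpha> b0 where apos: "\<alpha> > 0" and grep: "g = b0^2 + Q*[:\<alpha>:]^2"
    using g_rep[OF gd] unfolding g_def by blast
  define a0 where "a0 = [:\<alpha>:]"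
  have grep': "g = b0^2 + Q*a0^2" using grep by (simp add: a0_def)
  have two_a0: "[:2*\<alpha>:] = a0 + a0" by (simp add: a0_def)
  have dg: "degree g = 2" by (simp add: g_def)
  have gnz: "g \<noteq> 0" using dg by auto
  have gprime: "prime_elem g" using deg2_prime[OF dg] gpos' by (metis less_irrefl)
  have p1nz: "p1 \<noteq> 0" using gp' pnz by auto
  have nn1: "\<forall>t. poly p1 t \<ge> 0"
  proof
    fix t
    have "poly g t * poly p1 t \<ge> 0" using nn gp' by (metis poly_mult)
    thus "poly p1 t \<ge> 0" using gpos'[of t] by (simp add: zero_le_mult_iff)
  qed
  have dp: "degree p = degree p1 + 2" using gp' p1nz gnz dg by (simp add: degree_mult_eq)
  have good1: "good Q p1" using IH[of p1] dp p1nz nn1 by simp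
  define S1 where "S1 = Sset Q p1"
  have fin1: "finite S1" and ne1: "S1 \<noteq> {}" and ev1: "even (degree p1)"
    and bd1: "card S1 \<le> 2^(degree p1 div 2 + 1)"
    and eq1: "card S1 = 2^(degree p1 div 2 + 1) \<longleftrightarrow> squarefree p1 \<and> \<not> Q dvd p1"
    using good1 unfolding good_def S1_def by blast+
  define M where "M = mulp Q (a0, b0)"
  define M' where "M' = mulp Q (-a0, b0)"
  have nM: "nrm Q (M w) = g * nrm Q w" for w
    unfolding M_def nrm_mulp using grep' by (simp add: nrm_def)
  have nM': "nrm Q (M' w) = g * nrm Q w" for w
    unfolding M'_def nrm_mulp using grep' by (simp add: nrm_def)
  have MM': "M' (M w) = (g * fst w, g * snd w)" for w
    unfolding M_def M'_def mulp_conj grep' ..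
  have M'M: "M (M' w) = (g * fst w, g * snd w)" for w
    unfolding M_def M'_def mulp_conj' grep' ..
  have S: "Sset Q p = M ` S1 \<union> M' ` S1"
  proof (intro equalityI subsetI)
    fix w assume "w \<in> Sset Q p"
    then obtain a b where w: "w = (a,b)" and e: "b^2 + Q*a^2 = g * p1" by (auto simp: Sset_def gp')
    from key_split[OF grep' gprime e]
    show "w \<in> M ` S1 \<union> M' ` S1" unfolding M_def M'_def S1_def mem_Sset[symmetric] w by blast
  next
    fix w assume "w \<in> M ` S1 \<union> M' ` S1"
    then obtain v where v: "v \<in> S1" and vw: "w = M v \<or> w = M' v" by blast
    have nv: "nrm Q v = p1" using v unfolding S1_def mem_Sset .
    from vw show "w \<in> Sset Q p"
    proof (elim disjE)
      assume "w = M v" thus ?thesis by (simp add: mem_Sset nM nv gp')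
    next
      assume "w = M' v" thus ?thesis by (simp add: mem_Sset nM' nv gp')
    qed
  qed
  have injM: "inj_on M S1"
  proof (rule inj_onI)
    fix x y assume "M x = M y"
    hence "M' (M x) = M' (M y)" by simp
    thus "x = y" using gnz unfolding MM' by (simp add: prod_eq_iff)
  qed
  have injM': "inj_on M' S1"
  proof (rule inj_onI)
    fix x y assume "M' x = M' y"
    hence "M (M' x) = M (M' y)" by simp
    thus "x = y" using gnz unfolding M'M by (simp add: prod_eq_iff)
  qed
  have cA: "card (M ` S1) = card S1" using injM by (rule card_image)
  have cB: "card (M' ` S1) = card S1" using injM' by (rule card_image)
  have finS: "finite (Sset Q p)" unfolding S using fin1 by simp
  have neS: "Sset Q p \<noteq> {}" unfolding S using ne1 by simp
  have evp: "even (degree p)" using dp ev1 by simp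
  have dd: "degree p div 2 + 1 = (degree p1 div 2 + 1) + 1" using dp by simp
  have le: "card (Sset Q p) \<le> 2 * card S1"
    unfolding S using card_Un_le[of "M ` S1" "M' ` S1"] cA cB by simp
  have bd: "card (Sset Q p) \<le> 2^(degree p div 2 + 1)"
    using le bd1 unfolding dd by simp
  have iff: "card (Sset Q p) = 2^(degree p div 2 + 1) \<longleftrightarrow> squarefree p \<and> \<not> Q dvd p"
  proof (cases "g dvd p1")
    case True
    then obtain p2 where p2: "p1 = g * p2" by blast
    have p2nz: "p2 \<noteq> 0" using p2 p1nz by auto
    have nn2: "\<forall>t. poly p2 t \<ge> 0"
    proof
      fix t
      have "poly g t * poly p2 t \<ge> 0" using nn1 p2 by (metis poly_mult)
      thus "poly p2 t \<ge> 0" using gpos'[of t] by (simp add: zero_le_mult_iff)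
    qed
    have "degree p2 < degree p" using p2 dp p2nz gnz dg by (simp add: degree_mult_eq)
    hence "good Q p2" using IH p2nz nn2 by blast
    then obtain w0 where w0: "w0 \<in> Sset Q p2" unfolding good_def by blast
    have "M' w0 \<in> S1" using w0 nM' p2 unfolding S1_def mem_Sset by simp
    hence z1: "(g * fst w0, g * snd w0) \<in> M ` S1" using M'M[of w0] by (metis image_eqI)
    have "M w0 \<in> S1" using w0 nM p2 unfolding S1_def mem_Sset by simp
    hence z2: "(g * fst w0, g * snd w0) \<in> M' ` S1" using MM'[of w0] by (metis image_eqI)
    have "M ` S1 \<inter> M' ` S1 \<noteq> {}" using z1 z2 by blast
    hence "card (M ` S1 \<inter> M' ` S1) \<ge> 1" using fin1
      by (metis One_nat_def Suc_leI card_gt_0_iff finite_Int finite_imageI)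
    moreover have "card (M ` S1 \<union> M' ` S1) + card (M ` S1 \<inter> M' ` S1) = card (M ` S1) + card (M' ` S1)"
      using card_Un_Int[of "M ` S1" "M' ` S1"] fin1 by simp
    ultimately have "card (Sset Q p) < 2 * card S1" unfolding S using cA cB ne1 fin1 by linarith
    hence "card (Sset Q p) < 2^(degree p div 2 + 1)" using bd1 unfolding dd by simp
    moreover have "\<not> squarefree p"
    proof (rule not_squarefreeI)
      show "g^2 dvd p" using gp' p2 by (simp add: power2_eq_square mult.assoc)
      show "\<not> g dvd 1" using gprime by (simp add: prime_elem_def)
    qed
    ultimately show ?thesis by simp
  next
    case False
    have disj: "M ` S1 \<inter> M' ` S1 = {}"
    proof (rule ccontr)
      assume "M ` S1 \<inter> M' ` S1 \<noteq> {}"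
      then obtain w1 w2 where w1: "w1 \<in> S1" and w2: "w2 \<in> S1" and eq: "M w1 = M' w2" by blast
      obtain a b where z: "M w1 = (a, b)" by fastforce
      have nz: "b^2 + Q*a^2 = g * p1" using nM[of w1] w1 z unfolding S1_def mem_Sset by (simp add: nrm_def)
      have e1: "M' (a,b) = (g * fst w1, g * snd w1)" using MM'[of w1] z by simp
      have e2: "M (a,b) = (g * fst w2, g * snd w2)" using M'M[of w2] z eq by simp
      have f1: "- a0*b + b0*a = g * fst w1" "b0*b + Q*a0*a = g * snd w1"
        using e1 by (simp_all add: M'_def mulp_def)
      have f2: "a0*b + b0*a = g * fst w2" "b0*b - Q*a0*a = g * snd w2"
        using e2 by (simp_all add: M_def mulp_def)
      have "[:2*\<alpha>:] * b = g * (fst w2 - fst w1)"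
      proof -
        have "[:2*\<alpha>:] * b = (a0*b + b0*a) - (- a0*b + b0*a)" unfolding two_a0 by (simp add: algebra_simps)
        thus ?thesis using f1 f2 by (simp add: algebra_simps)
      qed
      hence "g dvd [:2*\<alpha>:] * b" by simp
      hence gb: "g dvd b" using apos unit_const_dvd[of "2*\<alpha>"] by simp
      have "[:2*\<alpha>:] * (Q * a) = g * (snd w1 - snd w2)"
      proof -
        have "[:2*\<alpha>:] * (Q * a) = (b0*b + Q*a0*a) - (b0*b - Q*a0*a)" unfolding two_a0 by (simp add: algebra_simps)
        thus ?thesis using f1 f2 by (simp add: algebra_simps)
      qed
      hence "g dvd [:2*\<alpha>:] * (Q * a)" by simp
      hence "g dvd Q * a" using apos unit_const_dvd[of "2*\<alpha>"] by simp
      hence "g dvd Q \<or> g dvd a" using gprime prime_elem_dvd_mult_iff by blast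
      moreover have "\<not> g dvd Q"
      proof
        assume "g dvd Q"
        then obtain k where k: "Q = g * k" by blast
        have knz: "k \<noteq> 0" using k Q_nz by auto
        have "degree k = 0" using k knz gnz dg degQ by (simp add: degree_mult_eq)
        define \<kappa> where "\<kappa> = coeff k 0"
        have kk: "k = [:\<kappa>:]" using \<open>degree k = 0\<close> unfolding \<kappa>_def by (simp add: degree_0_id)
        have "\<kappa> \<noteq> 0" using knz kk by simp
        hence "g = [:1/\<kappa>:] * Q" using k kk by (simp add: mult.assoc[symmetric] mult.commute)
        hence "Q dvd g" by (metis dvd_triv_right)
        hence "Q dvd p" using gp' by simp
        thus False using nq by simp
      qed
      ultimately have ga: "g dvd a" by simp
      obtain a2 where a2: "a = g * a2" using ga by blast
      obtain b2 where b2: "b = g * b2" using gb by blast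
      have "g * p1 = g * (g * (b2^2 + Q*a2^2))" using nz a2 b2 by (simp add: power2_eq_square algebra_simps)
      hence "p1 = g * (b2^2 + Q*a2^2)" using gnz by simp
      hence "g dvd p1" by simp
      thus False using False by simp
    qed
    have cS: "card (Sset Q p) = 2 * card S1"
      unfolding S using card_Un_disjoint[OF _ _ disj] fin1 cA cB by simp
    have nq1: "\<not> Q dvd p1" using nq gp' by (metis dvd_mult)
    have "squarefree p \<longleftrightarrow> squarefree p1"
    proof
      assume "squarefree p" thus "squarefree p1" using gp' by (metis squarefree_mono dvd_triv_right)
    next
      assume "squarefree p1" thus "squarefree p" using gp' sqfree_mult_prime[OF gprime False] by simp
    qed
    thus ?thesis using cS eq1 nq nq1 unfolding dd by simp
  qed
  show ?thesis unfolding good_def using neS finS evp bd iff by blast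
qed

lemma good_all: "p \<noteq> 0 \<Longrightarrow> \<forall>t. poly p t \<ge> 0 \<Longrightarrow> good Q p"
proof (induction "degree p" arbitrary: p rule: less_induct)
  case less
  have IH: "\<And>p'. degree p' < degree p \<Longrightarrow> p' \<noteq> 0 \<Longrightarrow> \<forall>t. poly p' t \<ge> 0 \<Longrightarrow> good Q p'"
    using less by blast
  show ?case
  proof (cases "degree p = 0")
    case True thus ?thesis using good_const less by blast
  next
    case dp: False
    show ?thesis
    proof (cases "\<exists>r. poly p r = 0")
      case True
      then obtain r where "poly p r = 0" by blast
      thus ?thesis using good_rr[OF less(2) less(3) _ IH] by blast
    next
      case nr: False
      show ?thesis
      proof (cases "Q dvd p")
        case True thus ?thesis using good_qd[OF less(2) less(3) _ IH] by blast
      next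
        case False thus ?thesis using good_cx[OF less(2) less(3) _ False dp IH] nr by blast
      qed
    qed
  qed
qed

end

definition dehom :: "bipoly \<Rightarrow> real poly" where
  "dehom f = map_poly (\<lambda>c. poly c 1) f"

definition hom :: "nat \<Rightarrow> real poly \<Rightarrow> bipoly" where
  "hom n a = (\<Sum>j\<le>n. monom (monom (coeff a j) (n - j)) j)"

lemma dehom_add: "dehom (f + g) = dehom f + dehom g"
  unfolding dehom_def by (rule map_poly_add_hom) auto

lemma dehom_mult: "dehom (f * g) = dehom f * dehom g"
  unfolding dehom_def by (rule map_poly_mult_hom) auto

lemma dehom_1: "dehom 1 = 1" unfolding dehom_def by simp

lemma dehom_0: "dehom 0 = 0" unfolding dehom_def by simp

lemma dehom_power: "dehom (f ^ k) = dehom f ^ k"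
  by (induction k) (simp_all add: dehom_1 dehom_mult)

lemma dehom_dvd: "f dvd g \<Longrightarrow> dehom f dvd dehom g"
  by (metis dvdE dvd_triv_left dehom_mult)

lemma dehom_unit: "is_unit f \<Longrightarrow> is_unit (dehom f)"
  by (metis dehom_1 dehom_dvd)

lemma coeff_dehom: "coeff (dehom f) j = poly (coeff f j) 1"
  unfolding dehom_def by (simp add: coeff_map_poly)

lemma coeff_hom: "coeff (hom n a) j = (if j \<le> n then monom (coeff a j) (n - j) else 0)"
  unfolding hom_def by (simp add: coeff_sum coeff_monom)

lemma coeff_coeff_hom:
  "coeff (coeff (hom n a) j) i = (if j \<le> n \<and> i = n - j then coeff a j else 0)"
  by (simp add: coeff_hom coeff_monom)

lemma hom_form: "is_form n (hom n a)"
  unfolding is_form_def coeff_coeff_hom by auto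

lemma hom_0: "hom n 0 = 0"
  by (rule poly_eqI) (simp add: coeff_hom)

lemma dehom_hom: "degree a \<le> n \<Longrightarrow> dehom (hom n a) = a"
  by (rule poly_eqI) (auto simp: coeff_dehom coeff_hom poly_monom coeff_eq_0)

lemma form_coeff:
  assumes "is_form n f"
  shows "coeff f j = (if j \<le> n then monom (coeff (coeff f j) (n - j)) (n - j) else 0)"
proof (cases "j \<le> n")
  case True
  have "coeff f j = monom (coeff (coeff f j) (n - j)) (n - j)"
  proof (rule poly_eqI)
    fix i
    show "coeff (coeff f j) i = coeff (monom (coeff (coeff f j) (n - j)) (n - j)) i"
    proof (cases "i = n - j")
      case True thus ?thesis by simp
    next
      case False
      have "coeff (coeff f j) i = 0"
      proof (rule ccontr)
        assume "coeff (coeff f j) i \<noteq> 0"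
        hence "i + j = n" using assms unfolding is_form_def by blast
        thus False using False by auto
      qed
      thus ?thesis using False by (simp add: coeff_monom)
    qed
  qed
  thus ?thesis using True by simp
next
  case False
  have "coeff f j = 0"
  proof (rule poly_eqI)
    fix i
    show "coeff (coeff f j) i = coeff 0 i"
    proof (rule ccontr)
      assume "coeff (coeff f j) i \<noteq> coeff 0 i"
      hence "i + j = n" using assms unfolding is_form_def by simp
      thus False using False by simp
    qed
  qed
  thus ?thesis using False by simp
qed

lemma form_hom_dehom:
  assumes "is_form n f"
  shows "f = hom n (dehom f)"
proof (rule poly_eqI)
  fix j
  show "coeff f j = coeff (hom n (dehom f)) j"
  proof (cases "j \<le> n")
    case True
    have c: "coeff f j = monom (coeff (coeff f j) (n - j)) (n - j)"
      using form_coeff[OF assms, of j] True by simp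
    have "poly (coeff f j) 1 = coeff (coeff f j) (n - j)"
      by (subst c) (simp add: poly_monom)
    hence "coeff (hom n (dehom f)) j = monom (coeff (coeff f j) (n - j)) (n - j)"
      using True by (simp add: coeff_hom coeff_dehom)
    thus ?thesis using c by simp
  next
    case False
    thus ?thesis using form_coeff[OF assms, of j] by (simp add: coeff_hom)
  qed
qed

lemma form_degree:
  assumes "is_form n f"
  shows "degree f \<le> n"
  by (intro degree_le allI impI) (subst form_coeff[OF assms], simp)

lemma form_dehom_degree:
  assumes "is_form n f"
  shows "degree (dehom f) \<le> n"
proof -
  have "degree (dehom f) \<le> degree f" unfolding dehom_def by (rule map_poly_degree_leq)
  thus ?thesis using form_degree[OF assms] by simp
qed

lemma form_mult:
  assumes "is_form m f" "is_form n g"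
  shows "is_form (m + n) (f * g)"
  unfolding is_form_def
proof (intro allI impI)
  fix i j
  assume "coeff (coeff (f * g) j) i \<noteq> 0"
  hence "(\<Sum>k\<le>j. coeff (coeff f k * coeff g (j - k)) i) \<noteq> 0"
    by (simp add: coeff_mult coeff_sum)
  then obtain k where k: "k \<le> j" "coeff (coeff f k * coeff g (j - k)) i \<noteq> 0"
    by (metis (no_types, lifting) atMost_iff sum.neutral)
  hence "(\<Sum>l\<le>i. coeff (coeff f k) l * coeff (coeff g (j - k)) (i - l)) \<noteq> 0"
    by (simp add: coeff_mult)
  then obtain l where l: "l \<le> i" "coeff (coeff f k) l * coeff (coeff g (j - k)) (i - l) \<noteq> 0"
    by (metis (no_types, lifting) atMost_iff sum.neutral)
  hence "l + k = m" "(i - l) + (j - k) = n" using assms unfolding is_form_def by auto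
  thus "i + j = m + n" using k(1) l(1) by linarith
qed

lemma form_add:
  assumes "is_form n f" "is_form n g"
  shows "is_form n (f + g)"
  using assms unfolding is_form_def by (metis add.right_neutral coeff_add)

lemma form_0: "is_form n 0"
  unfolding is_form_def by simp

lemma eval2_hom: "eval2 (hom n a) x y = (\<Sum>j\<le>n. coeff a j * x^(n-j) * y^j)"
proof -
  have "map_poly (\<lambda>c. poly c x) (hom n a) = (\<Sum>j\<le>n. monom (coeff a j * x^(n-j)) j)"
    unfolding hom_def
    by (subst hom_sum[where h = "map_poly (\<lambda>c. poly c x)"])
       (auto intro: map_poly_add_hom simp: map_poly_monom poly_monom)
  thus ?thesis unfolding eval2_def by (simp add: poly_sum poly_monom mult.assoc)
qed

lemma form_nz_dehom: "is_form n f \<Longrightarrow> f \<noteq> 0 \<Longrightarrow> dehom f \<noteq> 0"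
  using form_hom_dehom hom_0 by metis

lemma sqfree_down:
  assumes F: "is_form (2*d) f" and sf: "squarefree f"
  shows "squarefree (dehom f)"
proof (rule squarefreeI)
  fix x assume "x^2 dvd dehom f"
  then obtain k where k: "dehom f = x^2 * k" by blast
  have fnz: "f \<noteq> 0" using sf by auto
  have pnz: "dehom f \<noteq> 0" using form_nz_dehom[OF F fnz] .
  hence xnz: "x \<noteq> 0" and knz: "k \<noteq> 0" using k by auto
  define m where "m = degree x"
  have "degree (dehom f) = 2*m + degree k" using k xnz knz by (simp add: degree_mult_eq degree_power_eq m_def)
  moreover have "degree (dehom f) \<le> 2*d" using form_dehom_degree[OF F] .
  ultimately have dk: "degree k \<le> 2*d - 2*m" and md: "2*m \<le> 2*d" by linarith+
  define X where "X = hom m x"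
  define K where "K = hom (2*d - 2*m) k"
  have "is_form (m + m + (2*d - 2*m)) (X * X * K)"
    unfolding X_def K_def by (intro form_mult hom_form)
  hence FX: "is_form (2*d) (X * X * K)" using md by (simp add: algebra_simps)
  have "dehom (X * X * K) = x * x * k"
    unfolding X_def K_def dehom_mult using dk by (simp add: dehom_hom m_def)
  hence "dehom (X * X * K) = dehom f" using k by (simp add: power2_eq_square)
  hence "f = X * X * K" using form_hom_dehom[OF F] form_hom_dehom[OF FX] by metis
  hence "X^2 dvd f" by (simp add: power2_eq_square)
  hence "is_unit X" using sf squarefreeD by blast
  hence "is_unit (dehom X)" by (rule dehom_unit)
  thus "is_unit x" unfolding X_def by (simp add: dehom_hom m_def)
qed

lemma sqfree_up:
  assumes F: "is_form (2*d) f" and dp: "degree (dehom f) = 2*d" and sp: "squarefree (dehom f)"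
  shows "squarefree f"
proof (rule squarefreeI)
  fix x assume "x^2 dvd f"
  then obtain k where k: "f = x^2 * k" by blast
  have pnz: "dehom f \<noteq> 0" using sp by auto
  hence fnz: "f \<noteq> 0" using dehom_0 by auto
  hence xnz: "x \<noteq> 0" and knz: "k \<noteq> 0" using k by auto
  have pk: "dehom f = (dehom x)^2 * dehom k" using k by (simp add: dehom_mult dehom_power)
  have "(dehom x)^2 dvd dehom f" using pk by simp
  hence "is_unit (dehom x)" using sp squarefreeD by blast
  moreover have "dehom x \<noteq> 0" using pk pnz by auto
  ultimately have dx0: "degree (dehom x) = 0" using is_unit_iff_degree by blast
  have dxk: "degree (dehom x) \<le> degree x" "degree (dehom k) \<le> degree k"
    unfolding dehom_def by (rule map_poly_degree_leq)+
  have "dehom k \<noteq> 0" using pk pnz by auto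
  have "dehom x \<noteq> 0" using pk pnz by auto
  hence "degree (dehom f) = 2 * degree (dehom x) + degree (dehom k)"
    using pk \<open>dehom k \<noteq> 0\<close> by (simp add: degree_mult_eq degree_power_eq)
  hence "degree (dehom k) = 2*d" using dp dx0 by simp
  moreover have df: "degree f = 2 * degree x + degree k"
    using k xnz knz by (simp add: degree_mult_eq degree_power_eq)
  moreover have "degree f \<le> 2*d" using form_degree[OF F] .
  ultimately have "degree x = 0" using dxk by linarith
  define x0 where "x0 = coeff x 0"
  have xx: "x = [:x0:]" using \<open>degree x = 0\<close> unfolding x0_def by (simp add: degree_0_id)
  have dfe: "degree f = 2*d" using df \<open>degree x = 0\<close> dxk \<open>degree (dehom k) = 2*d\<close> form_degree[OF F] by linarith
  have "lead_coeff f \<noteq> 0" using fnz by simp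
  hence "coeff f (2*d) \<noteq> 0" using dfe by simp
  moreover have cf: "coeff f (2*d) = monom (coeff (coeff f (2*d)) 0) 0" using form_coeff[OF F, of "2*d"] by simp
  ultimately have c0: "coeff (coeff f (2*d)) 0 \<noteq> 0" by (metis monom_eq_0)
  have "coeff f (2*d) = x0^2 * coeff k (2*d)"
    using k xx by (simp add: power2_eq_square)
  hence "x0^2 * coeff k (2*d) = [:coeff (coeff f (2*d)) 0:]" using cf by (simp add: monom_0)
  hence "degree (x0^2 * coeff k (2*d)) = 0" by simp
  moreover have "x0 \<noteq> 0" using xx xnz by simp
  moreover have "coeff k (2*d) \<noteq> 0" using \<open>x0^2 * coeff k (2*d) = _\<close> c0 by auto
  ultimately have "degree x0 = 0" by (simp add: degree_mult_eq degree_power_eq)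
  hence "is_unit x0" using \<open>x0 \<noteq> 0\<close> is_unit_iff_degree by blast
  thus "is_unit x" unfolding xx by (subst is_unit_const_poly_iff)
qed

lemma q_dvd_up:
  assumes Fq: "is_form 2 q" and F: "is_form (2*d) f" and dq: "degree (dehom q) = 2"
    and dv: "dehom q dvd dehom f" and pnz: "dehom f \<noteq> 0"
  shows "q dvd f"
proof -
  obtain k where k: "dehom f = dehom q * k" using dv by blast
  have knz: "k \<noteq> 0" and qnz: "dehom q \<noteq> 0" using k pnz by auto
  have "degree (dehom f) = 2 + degree k" using k knz qnz dq by (simp add: degree_mult_eq)
  moreover have "degree (dehom f) \<le> 2*d" using form_dehom_degree[OF F] .
  ultimately have dk: "degree k \<le> 2*d - 2" and d1: "2 \<le> 2*d" by linarith+
  define K where "K = hom (2*d - 2) k"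
  have fk: "is_form (2 + (2*d - 2)) (q * K)" unfolding K_def by (intro form_mult Fq hom_form)
  have eqn: "2 + (2*d - 2) = 2*d" using d1 by linarith
  have FK: "is_form (2*d) (q * K)" using fk eqn by metis
  have "dehom (q * K) = dehom f" unfolding K_def dehom_mult using dk k by (simp add: dehom_hom)
  hence "f = q * K" using form_hom_dehom[OF F] form_hom_dehom[OF FK] by metis
  thus ?thesis by simp
qed

lemma deg_full:
  assumes F: "is_form (2*d) f" and sf: "squarefree f" and ev: "even (degree (dehom f))"
  shows "degree (dehom f) = 2*d"
proof (rule ccontr)
  assume ne: "degree (dehom f) \<noteq> 2*d"
  have "degree (dehom f) \<le> 2*d" using form_dehom_degree[OF F] .
  moreover obtain e where e: "degree (dehom f) = 2*e" using ev by (auto elim!: evenE)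
  ultimately have "e < d" using ne by simp
  hence dl: "degree (dehom f) \<le> 2*d - 2" and d1: "2 \<le> 2*d" using e by simp_all
  define X where "X = hom 1 1"
  define K where "K = hom (2*d - 2) (dehom f)"
  have fx: "is_form (1 + 1 + (2*d - 2)) (X * X * K)" unfolding X_def K_def by (intro form_mult hom_form)
  have eqn: "1 + 1 + (2*d - 2) = 2*d" using d1 by linarith
  have FX: "is_form (2*d) (X * X * K)" using fx eqn by metis
  have "dehom (X * X * K) = dehom f" unfolding X_def K_def dehom_mult using dl by (simp add: dehom_hom)
  hence "f = X * X * K" using form_hom_dehom[OF F] form_hom_dehom[OF FX] by metis
  hence "X^2 dvd f" by (simp add: power2_eq_square)
  hence "is_unit X" using sf squarefreeD by blast
  moreover have "X = [:[:0, 1:]:]"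
    unfolding X_def hom_def by (simp add: monom_0 monom_Suc)
  ultimately have "is_unit [:0, 1::real:]" using is_unit_const_poly_iff by metis
  thus False using is_unit_iff_degree[of "[:0, 1::real:]"] by simp
qed

theorem corollary1p2:
  fixes q f :: bipoly and d :: nat
  assumes "is_form 2 q" and "pos_def2 q"
    and "is_form (2 * d) f" and "psd2 f"
  shows "(\<exists>\<xi> \<eta>. is_form (d - 1) \<xi> \<and> is_form d \<eta> \<and> f = \<eta>\<^sup>2 + q * \<xi>\<^sup>2)
    \<and> finite {(\<xi>, \<eta>). is_form (d - 1) \<xi> \<and> is_form d \<eta> \<and> f = \<eta>\<^sup>2 + q * \<xi>\<^sup>2}
    \<and> card {(\<xi>, \<eta>). is_form (d - 1) \<xi> \<and> is_form d \<eta> \<and> f = \<eta>\<^sup>2 + q * \<xi>\<^sup>2} \<le> 2 ^ (d + 1)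
    \<and> (card {(\<xi>, \<eta>). is_form (d - 1) \<xi> \<and> is_form d \<eta> \<and> f = \<eta>\<^sup>2 + q * \<xi>\<^sup>2} = 2 ^ (d + 1)
        \<longleftrightarrow> (\<not> q dvd f \<and> squarefree f))"
proof -
  note Fq = assms(1) and F = assms(3)
  define Q where "Q = dehom q"
  define p where "p = dehom f"
  have qh: "q = hom 2 Q" using form_hom_dehom[OF Fq] unfolding Q_def .
  have fh: "f = hom (2*d) p" using form_hom_dehom[OF F] unfolding p_def .
  have Qpos: "poly Q t > 0" for t
  proof -
    have "eval2 q 1 t > 0" using assms(2) unfolding pos_def2_def by simp
    thus ?thesis by (simp add: eval2_def Q_def dehom_def)
  qed
  have c2: "coeff Q 2 > 0"
  proof -
    have "eval2 q 0 1 > 0" using assms(2) unfolding pos_def2_def by simp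
    moreover have "eval2 q 0 1 = coeff Q 2"
      unfolding qh eval2_hom by (simp add: numeral_2_eq_2 atMost_Suc)
    ultimately show ?thesis by simp
  qed
  have dQ: "degree Q = 2"
  proof -
    have "degree Q \<le> 2" using form_dehom_degree[OF Fq] unfolding Q_def .
    moreover have "2 \<le> degree Q" using c2 by (intro le_degree) simp
    ultimately show ?thesis by simp
  qed
  have lQ: "lead_coeff Q > 0" using dQ c2 by simp
  interpret QQ Q by unfold_locales (use Qpos dQ lQ in auto)
  have pnn: "\<forall>t. poly p t \<ge> 0"
  proof
    fix t
    have "eval2 f 1 t \<ge> 0" using assms(4) unfolding psd2_def by simp
    thus "poly p t \<ge> 0" by (simp add: eval2_def p_def dehom_def)
  qed
  have dpd: "degree p \<le> 2*d" using form_dehom_degree[OF F] unfolding p_def .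
  define T where "T = {(\<xi>, \<eta>). is_form (d - 1) \<xi> \<and> is_form d \<eta> \<and> f = \<eta>\<^sup>2 + q * \<xi>\<^sup>2}"
  define H where "H = (\<lambda>w::real poly \<times> real poly. (hom (d-1) (fst w), hom d (snd w)))"
  have degs: "degree b \<le> d \<and> degree a \<le> d - 1 \<and> (a \<noteq> 0 \<longrightarrow> 1 \<le> d)" if "(a,b) \<in> Sset Q p" for a b
  proof -
    have "p = b^2 + Q*a^2" using that by (simp add: Sset_def)
    hence "max (2 * degree b) (if a = 0 then 0 else 2 + 2 * degree a) \<le> 2*d"
      using dpd deg_norm by simp
    thus ?thesis by (cases "a = 0") auto
  qed
  have TS: "T = H ` Sset Q p"
  proof (intro equalityI subsetI)
    fix z assume "z \<in> T"
    then obtain \<xi> \<eta> where z: "z = (\<xi>, \<eta>)" and f\<xi>: "is_form (d - 1) \<xi>" and f\<eta>: "is_form d \<eta>"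
      and e: "f = \<eta>\<^sup>2 + q * \<xi>\<^sup>2" unfolding T_def by blast
    have "p = (dehom \<eta>)^2 + Q * (dehom \<xi>)^2"
      unfolding p_def Q_def e by (simp add: dehom_add dehom_mult dehom_power)
    hence "(dehom \<xi>, dehom \<eta>) \<in> Sset Q p" by (simp add: Sset_def)
    moreover have "H (dehom \<xi>, dehom \<eta>) = z"
      unfolding H_def z using form_hom_dehom[OF f\<xi>] form_hom_dehom[OF f\<eta>] by simp
    ultimately show "z \<in> H ` Sset Q p" by blast
  next
    fix z assume "z \<in> H ` Sset Q p"
    then obtain a b where ab: "(a,b) \<in> Sset Q p" and z: "z = H (a,b)" by auto
    have e: "p = b^2 + Q*a^2" using ab by (simp add: Sset_def)
    note dg = degs[OF ab]
    define \<xi> where "\<xi> = hom (d-1) a"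
    define \<eta> where "\<eta> = hom d b"
    have "is_form (d + d) (\<eta> * \<eta>)" unfolding \<eta>_def by (intro form_mult hom_form)
    hence f1: "is_form (2*d) (\<eta>^2)" by (simp add: power2_eq_square mult_2)
    have f2: "is_form (2*d) (q * \<xi>^2)"
    proof (cases "a = 0")
      case True thus ?thesis by (simp add: \<xi>_def hom_0 form_0)
    next
      case False
      hence d1: "1 \<le> d" using dg by blast
      have "is_form (2 + ((d-1) + (d-1))) (q * (\<xi> * \<xi>))" unfolding \<xi>_def by (intro form_mult Fq hom_form)
      moreover have "2 + ((d-1) + (d-1)) = 2*d" using d1 by linarith
      ultimately show ?thesis by (metis power2_eq_square)
    qed
    have FR: "is_form (2*d) (\<eta>^2 + q * \<xi>^2)" using f1 f2 by (rule form_add)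
    have "dehom (\<eta>^2 + q * \<xi>^2) = b^2 + Q*a^2"
      unfolding \<xi>_def \<eta>_def Q_def[symmetric] dehom_add dehom_mult dehom_power
      using dg by (simp add: dehom_hom)
    hence "dehom (\<eta>^2 + q * \<xi>^2) = dehom f" using e p_def by simp
    hence "f = \<eta>^2 + q * \<xi>^2" using form_hom_dehom[OF F] form_hom_dehom[OF FR] by metis
    moreover have "z = (\<xi>, \<eta>)" unfolding z H_def \<xi>_def \<eta>_def by simp
    moreover have "is_form (d-1) \<xi>" "is_form d \<eta>" unfolding \<xi>_def \<eta>_def by (rule hom_form)+
    ultimately show "z \<in> T" unfolding T_def by simp
  qed
  have inj: "inj_on H (Sset Q p)"
  proof (rule inj_onI)
    fix w1 w2 assume w1: "w1 \<in> Sset Q p" and w2: "w2 \<in> Sset Q p" and eq: "H w1 = H w2"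
    obtain a1 b1 where ab1: "w1 = (a1, b1)" by fastforce
    obtain a2 b2 where ab2: "w2 = (a2, b2)" by fastforce
    note d1 = degs[OF w1[unfolded ab1]] and d2 = degs[OF w2[unfolded ab2]]
    have "hom (d-1) a1 = hom (d-1) a2" "hom d b1 = hom d b2" using eq ab1 ab2 by (simp_all add: H_def)
    hence "dehom (hom (d-1) a1) = dehom (hom (d-1) a2)" "dehom (hom d b1) = dehom (hom d b2)" by simp_all
    hence "a1 = a2" "b1 = b2" using d1 d2 by (simp_all add: dehom_hom)
    thus "w1 = w2" using ab1 ab2 by simp
  qed
  have cardT: "card T = card (Sset Q p)" unfolding TS using inj by (rule card_image)
  have finT: "finite T \<longleftrightarrow> finite (Sset Q p)" unfolding TS using inj by (rule finite_image_iff)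
  have neT: "T \<noteq> {} \<longleftrightarrow> Sset Q p \<noteq> {}" unfolding TS by simp
  have main: "T \<noteq> {} \<and> finite T \<and> card T \<le> 2^(d+1) \<and> (card T = 2^(d+1) \<longleftrightarrow> \<not> q dvd f \<and> squarefree f)"
  proof (cases "f = 0")
    case True
    hence p0: "p = 0" by (simp add: p_def dehom_0)
    have S0: "Sset Q p = {(0,0)}"
    proof (intro equalityI subsetI)
      fix w assume "w \<in> Sset Q p"
      then obtain a b where w: "w = (a,b)" and e: "0 = b^2 + Q*a^2" using p0 by (auto simp: Sset_def)
      thus "w \<in> {(0,0)}" using norm_zero[of b a] by simp
    next
      fix w assume "w \<in> {(0::real poly, 0::real poly)}"
      thus "w \<in> Sset Q p" using p0 by (simp add: Sset_def)
    qed
    have c1: "card T = 1" using cardT S0 by simp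
    have "(2::nat) \<le> 2^(d+1)" by (metis One_nat_def le_add2 one_le_numeral power_increasing power_one_right)
    hence "card T \<noteq> 2^(d+1)" "card T \<le> 2^(d+1)" using c1 by simp_all
    moreover have "q dvd f" using True by simp
    ultimately show ?thesis using neT finT S0 by simp
  next
    case False
    have pnz: "p \<noteq> 0" using form_nz_dehom[OF F False] unfolding p_def .
    have gd: "good Q p" using good_all[OF pnz pnn] .
    have ne: "Sset Q p \<noteq> {}" and fin: "finite (Sset Q p)" and ev: "even (degree p)"
      and bd: "card (Sset Q p) \<le> 2^(degree p div 2 + 1)"
      and iff: "card (Sset Q p) = 2^(degree p div 2 + 1) \<longleftrightarrow> squarefree p \<and> \<not> Q dvd p"
      using gd unfolding good_def by blast+
    have dd: "degree p div 2 \<le> d" using dpd by simp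
    have pw: "(2::nat)^(degree p div 2 + 1) \<le> 2^(d+1)" using dd by (intro power_increasing) simp_all
    have bdT: "card T \<le> 2^(d+1)" unfolding cardT using bd pw by (rule le_trans)
    have iffT: "card T = 2^(d+1) \<longleftrightarrow> degree p = 2*d \<and> squarefree p \<and> \<not> Q dvd p"
    proof
      assume c: "card T = 2^(d+1)"
      hence "(2::nat)^(d+1) \<le> 2^(degree p div 2 + 1)" using bd cardT by simp
      hence "d + 1 \<le> degree p div 2 + 1" by (rule power_le_imp_le_exp[rotated]) simp
      hence "degree p div 2 = d" using dd by simp
      hence dp: "degree p = 2*d" using ev by (metis dvd_mult_div_cancel)
      thus "degree p = 2*d \<and> squarefree p \<and> \<not> Q dvd p" using iff c cardT dp by simp
    next
      assume h: "degree p = 2*d \<and> squarefree p \<and> \<not> Q dvd p"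
      hence "degree p div 2 = d" by simp
      thus "card T = 2^(d+1)" using iff h cardT by simp
    qed
    have eqv: "(degree p = 2*d \<and> squarefree p \<and> \<not> Q dvd p) \<longleftrightarrow> (\<not> q dvd f \<and> squarefree f)"
    proof
      assume h: "degree p = 2*d \<and> squarefree p \<and> \<not> Q dvd p"
      have "squarefree f" using sqfree_up[OF F] h unfolding p_def by blast
      moreover have "\<not> q dvd f"
      proof
        assume "q dvd f"
        hence "Q dvd p" unfolding Q_def p_def by (rule dehom_dvd)
        thus False using h by simp
      qed
      ultimately show "\<not> q dvd f \<and> squarefree f" by simp
    next
      assume h: "\<not> q dvd f \<and> squarefree f"
      have "degree p = 2*d" using deg_full[OF F] h ev unfolding p_def by blast
      moreover have "squarefree p" using sqfree_down[OF F] h unfolding p_def by blast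
      moreover have "\<not> Q dvd p"
      proof
        assume "Q dvd p"
        hence "q dvd f" using q_dvd_up[OF Fq F] dQ pnz unfolding Q_def p_def by blast
        thus False using h by simp
      qed
      ultimately show "degree p = 2*d \<and> squarefree p \<and> \<not> Q dvd p" by simp
    qed
    show ?thesis using ne neT fin finT bdT iffT eqv by blast
  qed
  have ex: "\<exists>\<xi> \<eta>. is_form (d - 1) \<xi> \<and> is_form d \<eta> \<and> f = \<eta>\<^sup>2 + q * \<xi>\<^sup>2"
    using main unfolding T_def by blast
  show ?thesis using ex main unfolding T_def by blast
qed

end
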